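(* For every constant $\varepsilon \in (0, 1]$, there exists a semi-streaming $(3+\varepsilon)$-approximation algorithm for maximizing a non-negative submodular function subject to a cardinality constraint. The algorithm stores at most $O(k\varepsilon^{-2}\log k)$ elements.
   Context: Problem: given a finite ground set $N$, a non-negative submodular function $f\colon 2^N\to\mathbb{R}_{\ge 0}$ (accessed through a value oracle returning $f(S)$ for any $S\subseteq N$) and a positive integer $k$, find $S\subseteq N$ with $|S|\le k$ maximizing $f(S)$. Let $OPT$ denote an optimal solution. A (possibly randomized) algorithm is a $\beta$-approximation if its output $S$ is always feasible and satisfies $\mathbb{E}[f(S)]\ge f(OPT)/\beta$. In the data stream model the elements of $N$ arrive one at a time in an arbitrary order, and the algorithm processes them in a single pass; a semi-streaming algorithm is a data stream algorithm whose memory is $O(k\cdot \mathrm{polylog}(k,|N|))$. (No bound on running time is claimed.) *)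

theory Defs
  imports "HOL-Probability.Probability"
begin

definition nonneg_submodular_on :: "'a set \<Rightarrow> ('a set \<Rightarrow> real) \<Rightarrow> bool" where
  "nonneg_submodular_on N f \<longleftrightarrow>
     (\<forall>S. S \<subseteq> N \<longrightarrow> 0 \<le> f S) \<and>
     (\<forall>A B. A \<subseteq> N \<longrightarrow> B \<subseteq> N \<longrightarrow> f (A \<union> B) + f (A \<inter> B) \<le> f A + f B)"

text \<open>The memory of the algorithm is a list of stored elements M together with a
list of auxiliary real-valued words. The algorithm never sees element identities:
when a new element x arrives it only sees the value oracle restricted to subsets of
the list L = M @ [x] (a view indexed by positions), the length of L, the parameter k
and its auxiliary words. It then randomly chooses which positions of L to keep and
its new auxiliary words.\<close>

type_synonym view = "nat set \<Rightarrow> real"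
type_synonym stepfn = "nat \<Rightarrow> view \<Rightarrow> nat \<Rightarrow> real list \<Rightarrow> (nat list \<times> real list) pmf"
type_synonym finfn = "nat \<Rightarrow> view \<Rightarrow> nat \<Rightarrow> real list \<Rightarrow> nat set pmf"

definition view_of :: "('a set \<Rightarrow> real) \<Rightarrow> 'a list \<Rightarrow> view" where
  "view_of f L = (\<lambda>I. f ((\<lambda>i. L ! i) ` (I \<inter> {..<length L})))"

definition select :: "'a list \<Rightarrow> nat list \<Rightarrow> 'a list" where
  "select L is = map (\<lambda>i. L ! i) (filter (\<lambda>i. i < length L) is)"

fun run_from :: "stepfn \<Rightarrow> nat \<Rightarrow> ('a set \<Rightarrow> real) \<Rightarrow> ('a list \<times> real list)
                 \<Rightarrow> 'a list \<Rightarrow> ('a list \<times> real list) pmf" where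
  "run_from st k f s [] = return_pmf s"
| "run_from st k f (M, a) (x # xs) =
     bind_pmf (st k (view_of f (M @ [x])) (length (M @ [x])) a)
       (\<lambda>(is, a'). run_from st k f (select (M @ [x]) is, a') xs)"

definition run :: "stepfn \<Rightarrow> nat \<Rightarrow> ('a set \<Rightarrow> real) \<Rightarrow> 'a list \<Rightarrow> ('a list \<times> real list) pmf" where
  "run st k f xs = run_from st k f ([], []) xs"

definition stream_output :: "stepfn \<Rightarrow> finfn \<Rightarrow> nat \<Rightarrow> ('a set \<Rightarrow> real) \<Rightarrow> 'a list \<Rightarrow> 'a set pmf" where
  "stream_output st fin k f xs =
     bind_pmf (run st k f xs)
       (\<lambda>(M, a). map_pmf (\<lambda>I. (\<lambda>i. M ! i) ` (I \<inter> {..<length M}))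
                          (fin k (view_of f M) (length M) a))"

end

theory Submission
  imports Defs
begin
section \<open>Submodularity lemmas\<close>

lemma sm_nonneg: "nonneg_submodular_on N f \<Longrightarrow> S \<subseteq> N \<Longrightarrow> 0 \<le> f S"
  unfolding nonneg_submodular_on_def by blast

lemma sm_sub: "nonneg_submodular_on N f \<Longrightarrow> A \<subseteq> N \<Longrightarrow> B \<subseteq> N \<Longrightarrow>
   f (A \<union> B) + f (A \<inter> B) \<le> f A + f B"
  unfolding nonneg_submodular_on_def by blast

lemma sm_dimin:
  assumes sm: "nonneg_submodular_on N f" and AB: "A \<subseteq> B" "B \<subseteq> N" and x: "x \<in> N" "x \<notin> B"
  shows "f (insert x B) - f B \<le> f (insert x A) - f A"
proof -
  have "f (B \<union> insert x A) + f (B \<inter> insert x A) \<le> f B + f (insert x A)"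
    using sm_sub[OF sm, of B "insert x A"] AB x by auto
  moreover have "B \<union> insert x A = insert x B" using AB by auto
  moreover have "B \<inter> insert x A = A" using AB x by auto
  ultimately show ?thesis by simp
qed

lemma sm_sum:
  assumes sm: "nonneg_submodular_on N f" and fin: "finite X" and A: "A \<subseteq> N" and X: "X \<subseteq> N"
  shows "f (A \<union> X) \<le> f A + (\<Sum>x\<in>X. f (insert x A) - f A)"
  using fin X
proof (induction X rule: finite_induct)
  case empty then show ?case by simp
next
  case (insert x X)
  show ?case
  proof (cases "x \<in> A")
    case True
    then have "A \<union> insert x X = A \<union> X" by auto
    moreover have "insert x A = A" using True by auto
    ultimately show ?thesis using insert by simp
  next
    case False
    have "f (insert x (A \<union> X)) - f (A \<union> X) \<le> f (insert x A) - f A"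
      using sm_dimin[OF sm, of A "A \<union> X" x] insert A False by auto
    then show ?thesis using insert by simp
  qed
qed

lemma sm_disj_sum:
  assumes sm: "nonneg_submodular_on N f" and S: "\<And>i. i < l \<Longrightarrow> S i \<subseteq> N" and Q: "Q \<subseteq> N"
    and dj: "\<And>i i'. i < l \<Longrightarrow> i' < l \<Longrightarrow> i \<noteq> i' \<Longrightarrow> S i \<inter> S i' = {}"
  shows "(real l - 1) * f Q + f ((\<Union>i<l. S i) \<union> Q) \<le> (\<Sum>i<l. f (S i \<union> Q))"
  using S dj
proof (induction l)
  case 0 then show ?case by simp
next
  case (Suc l)
  have IH: "(real l - 1) * f Q + f ((\<Union>i<l. S i) \<union> Q) \<le> (\<Sum>i<l. f (S i \<union> Q))"
    using Suc by auto
  have U: "(\<Union>i<l. S i) \<subseteq> N" using Suc.prems(1) by (meson UN_least lessThan_iff less_SucI)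
  have "f (((\<Union>i<l. S i) \<union> Q) \<union> (S l \<union> Q)) + f (((\<Union>i<l. S i) \<union> Q) \<inter> (S l \<union> Q))
        \<le> f ((\<Union>i<l. S i) \<union> Q) + f (S l \<union> Q)"
    using sm_sub[OF sm] U Q Suc.prems by auto
  moreover have "((\<Union>i<l. S i) \<union> Q) \<union> (S l \<union> Q) = (\<Union>i<Suc l. S i) \<union> Q"
    by (auto simp: lessThan_Suc)
  moreover have "((\<Union>i<l. S i) \<union> Q) \<inter> (S l \<union> Q) = Q"
    using Suc.prems(2)[of _ l] by (auto, metis disjoint_iff less_Suc_eq nat_neq_iff)
  ultimately show ?case using IH by (simp add: algebra_simps)
qed

section \<open>Idealized threshold greedy copies\<close>

definition okp :: "('a set \<Rightarrow> real) \<Rightarrow> nat \<Rightarrow> real \<Rightarrow> 'a set \<Rightarrow> 'a \<Rightarrow> bool" where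
  "okp f k t S x \<longleftrightarrow> card S < k \<and> t \<le> f (insert x S) - f S"

definition istep :: "('a set \<Rightarrow> real) \<Rightarrow> nat \<Rightarrow> nat \<Rightarrow> (int \<Rightarrow> real)
     \<Rightarrow> (int \<Rightarrow> nat \<Rightarrow> 'a set) \<Rightarrow> 'a \<Rightarrow> (int \<Rightarrow> nat \<Rightarrow> 'a set)" where
  "istep f k l tau S x = (\<lambda>j i. if find (\<lambda>i'. okp f k (tau j) (S j i') x) [0..<l] = Some i
      then insert x (S j i) else S j i)"

definition ideal :: "('a set \<Rightarrow> real) \<Rightarrow> nat \<Rightarrow> nat \<Rightarrow> (int \<Rightarrow> real) \<Rightarrow> 'a list \<Rightarrow> int \<Rightarrow> nat \<Rightarrow> 'a set" where
  "ideal f k l tau p = foldl (istep f k l tau) (\<lambda>j i. {}) p"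

lemma ideal_Nil[simp]: "ideal f k l tau [] = (\<lambda>j i. {})"
  by (simp add: ideal_def)

lemma ideal_snoc: "ideal f k l tau (p @ [x]) = istep f k l tau (ideal f k l tau p) x"
  by (simp add: ideal_def)

lemma ideal_app: "ideal f k l tau (p @ q) = foldl (istep f k l tau) (ideal f k l tau p) q"
  by (simp add: ideal_def)

lemma find_upt_lt: "find P [0..<l] = Some i \<Longrightarrow> i < l"
  by (auto simp: find_Some_iff)

lemma ideal_sub: "ideal f k l tau p j i \<subseteq> set p"
  by (induction p rule: rev_induct) (auto simp: ideal_snoc istep_def)

lemma ideal_fin: "finite (ideal f k l tau p j i)"
  using ideal_sub finite_subset by (metis List.finite_set)

lemma ideal_ge: "l \<le> i \<Longrightarrow> ideal f k l tau p j i = {}"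
  by (induction p rule: rev_induct) (auto simp: ideal_snoc istep_def dest: find_upt_lt)

lemma ideal_card: "card (ideal f k l tau p j i) \<le> k"
proof (induction p rule: rev_induct)
  case Nil then show ?case by simp
next
  case (snoc x p)
  show ?case
  proof (cases "find (\<lambda>i'. okp f k (tau j) (ideal f k l tau p j i') x) [0..<l] = Some i")
    case True
    then have "okp f k (tau j) (ideal f k l tau p j i) x" by (auto simp: find_Some_iff)
    then have "card (ideal f k l tau p j i) < k" by (simp add: okp_def)
    then show ?thesis using True ideal_fin[of f k l tau p j i]
      by (simp add: ideal_snoc istep_def card_insert_if)
  next
    case False then show ?thesis using snoc by (simp add: ideal_snoc istep_def)
  qed
qed

lemma ideal_disj: "distinct p \<Longrightarrow> i \<noteq> i' \<Longrightarrow> ideal f k l tau p j i \<inter> ideal f k l tau p j i' = {}"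
proof (induction p rule: rev_induct)
  case Nil then show ?case by simp
next
  case (snoc x p)
  have "x \<notin> ideal f k l tau p j i" "x \<notin> ideal f k l tau p j i'"
    using snoc.prems ideal_sub by fastforce+
  then show ?case using snoc by (auto simp: ideal_snoc istep_def)
qed

lemma ideal_mono_step: "ideal f k l tau p j i \<subseteq> ideal f k l tau (p @ [x]) j i"
  by (auto simp: ideal_snoc istep_def)

lemma ideal_mono: "ideal f k l tau p j i \<subseteq> ideal f k l tau (p @ q) j i"
proof (induction q rule: rev_induct)
  case Nil then show ?case by simp
next
  case (snoc x q)
  then show ?case using ideal_mono_step[of f k l tau "p @ q" j i x] by auto
qed

lemma ideal_freeze_step: "k \<le> card (ideal f k l tau p j i) \<Longrightarrow> ideal f k l tau (p @ [x]) j i = ideal f k l tau p j i"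
  by (auto simp: ideal_snoc istep_def find_Some_iff okp_def)

lemma ideal_freeze: "k \<le> card (ideal f k l tau p j i) \<Longrightarrow> ideal f k l tau (p @ q) j i = ideal f k l tau p j i"
proof (induction q rule: rev_induct)
  case Nil then show ?case by simp
next
  case (snoc x q)
  then show ?case using ideal_freeze_step[of k f l tau "p @ q" j i x] by auto
qed

lemma ideal_empty:
  assumes "0 \<le> f {}" "\<forall>x\<in>set p. f {x} < tau j"
  shows "ideal f k l tau p j i = {}"
  using assms(2)
proof (induction p arbitrary: i rule: rev_induct)
  case Nil then show ?case by simp
next
  case (snoc x p)
  then have e: "\<And>i. ideal f k l tau p j i = {}" by auto
  have "\<not> okp f k (tau j) {} x" using snoc.prems assms(1) by (auto simp: okp_def)
  then have "find (\<lambda>i'. okp f k (tau j) (ideal f k l tau p j i') x) [0..<l] = None"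
    by (simp add: e find_None_iff)
  then show ?case by (simp add: ideal_snoc istep_def e)
qed

context
  fixes N and f :: "'a set \<Rightarrow> real"
  assumes sm: "nonneg_submodular_on N f"
begin

lemma ideal_val:
  assumes "distinct p" "set p \<subseteq> N"
  shows "tau j * card (ideal f k l tau p j i) \<le> f (ideal f k l tau p j i) - f {}"
  using assms
proof (induction p arbitrary: i rule: rev_induct)
  case Nil then show ?case by simp
next
  case (snoc x p)
  have IH: "tau j * card (ideal f k l tau p j i) \<le> f (ideal f k l tau p j i) - f {}"
    using snoc by auto
  have xn: "x \<notin> ideal f k l tau p j i" using snoc.prems ideal_sub by fastforce
  show ?case
  proof (cases "find (\<lambda>i'. okp f k (tau j) (ideal f k l tau p j i') x) [0..<l] = Some i")
    case True
    then have "okp f k (tau j) (ideal f k l tau p j i) x" by (auto simp: find_Some_iff)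
    then have "tau j \<le> f (insert x (ideal f k l tau p j i)) - f (ideal f k l tau p j i)"
      by (simp add: okp_def)
    then show ?thesis using True IH xn ideal_fin[of f k l tau p j i]
      by (simp add: ideal_snoc istep_def algebra_simps)
  next
    case False then show ?thesis using IH by (simp add: ideal_snoc istep_def)
  qed
qed

lemma ideal_rej:
  assumes "distinct p" "set p \<subseteq> N" "x \<in> set p"
    and notin: "\<And>i. i < l \<Longrightarrow> x \<notin> ideal f k l tau p j i"
    and small: "\<And>i. i < l \<Longrightarrow> card (ideal f k l tau p j i) < k"
    and il: "i < l"
  shows "f (insert x (ideal f k l tau p j i)) - f (ideal f k l tau p j i) < tau j"
proof -
  obtain p1 p2 where p: "p = p1 @ x # p2" using assms(3) split_list by metis
  let ?S = "ideal f k l tau p1 j"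
  have x1: "x \<notin> ?S i'" for i' using assms(1) ideal_sub[of f k l tau p1 j i'] p by auto
  have fn: "find (\<lambda>i'. okp f k (tau j) (?S i') x) [0..<l] = None"
  proof (rule ccontr)
    assume "find (\<lambda>i'. okp f k (tau j) (?S i') x) [0..<l] \<noteq> None"
    then obtain i0 where i0: "find (\<lambda>i'. okp f k (tau j) (?S i') x) [0..<l] = Some i0" by auto
    then have "i0 < l" by (rule find_upt_lt)
    have "x \<in> ideal f k l tau (p1 @ [x]) j i0" using i0 by (simp add: ideal_snoc istep_def)
    also have "\<dots> \<subseteq> ideal f k l tau ((p1 @ [x]) @ p2) j i0" by (rule ideal_mono)
    finally show False using notin[OF \<open>i0 < l\<close>] p by simp
  qed
  then have nok: "\<not> okp f k (tau j) (?S i) x" using il by (simp add: find_None_iff)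
  have sub: "?S i \<subseteq> ideal f k l tau p j i" using ideal_mono[of f k l tau p1 j i "x # p2"] p by simp
  have "card (?S i) \<le> card (ideal f k l tau p j i)" using sub ideal_fin by (rule card_mono[rotated])
  then have "card (?S i) < k" using small[OF il] by simp
  then have lt: "f (insert x (?S i)) - f (?S i) < tau j" using nok by (simp add: okp_def)
  have "f (insert x (ideal f k l tau p j i)) - f (ideal f k l tau p j i) \<le> f (insert x (?S i)) - f (?S i)"
    using sm_dimin[OF sm sub] ideal_sub[of f k l tau p j i] assms(2,3) notin[OF il] by blast
  then show ?thesis using lt by simp
qed

end

context
  fixes N and f :: "'a set \<Rightarrow> real"
  assumes sm: "nonneg_submodular_on N f"
begin

lemma core_approx:
  fixes S :: "nat \<Rightarrow> 'a set" and T :: "'a set" and k l :: nat and t R b :: real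
  assumes T: "T \<subseteq> N" "finite T" "card T \<le> k"
    and l: "2 \<le> l" and R: "R * (real l - 1) = 3 * real l - 1" and b: "1 \<le> b"
    and t: "0 < t"
    and S: "\<And>i. i < l \<Longrightarrow> S i \<subseteq> N" "\<And>i. i < l \<Longrightarrow> finite (S i)"
           "\<And>i. i < l \<Longrightarrow> card (S i) \<le> k"
    and dj: "\<And>i i'. i < l \<Longrightarrow> i' < l \<Longrightarrow> i \<noteq> i' \<Longrightarrow> S i \<inter> S i' = {}"
    and val: "\<And>i. i < l \<Longrightarrow> t * card (S i) \<le> f (S i)"
    and rej: "(\<forall>i<l. card (S i) < k) \<Longrightarrow> \<forall>x \<in> T - (\<Union>i<l. S i). \<forall>i<l.
                 f (insert x (S i)) - f (S i) < t"
    and up: "f T \<le> R * b * (real k * t)" and lo: "real k * t * R \<le> f T"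
  shows "\<exists>B. B \<subseteq> (\<Union>i<l. S i) \<and> card B \<le> k \<and> f T \<le> R * b * f B"
proof -
  let ?U = "\<Union>i<l. S i"
  have R1: "1 \<le> R"
  proof (rule ccontr)
    assume "\<not> 1 \<le> R"
    then have "R * (real l - 1) \<le> 1 * (real l - 1)" using l by (intro mult_right_mono) auto
    then show False using R l by simp
  qed
  have Rpos: "0 < R" using R1 by simp
  show ?thesis
  proof (cases "\<exists>i<l. k \<le> card (S i)")
    case True
    then obtain i where i: "i < l" "k \<le> card (S i)" by auto
    have "real k * t \<le> t * card (S i)" using i t by (simp add: mult.commute)
    also have "\<dots> \<le> f (S i)" using val i by simp
    finally have "real k * t \<le> f (S i)" .
    then have "R * b * (real k * t) \<le> R * b * f (S i)"
      using Rpos b by (intro mult_left_mono) auto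
    then show ?thesis using i up S(3)[OF i(1)] by (intro exI[of _ "S i"]) auto
  next
    case False
    then have small: "\<forall>i<l. card (S i) < k" by (simp add: not_le)
    note rj = rej[OF small]
    let ?v = "f T"
    let ?w = "f T / R"
    have "?w * (3 * real l - 1) = ?w * R * (real l - 1)" unfolding R[symmetric] by (simp only: mult.assoc)
    also have "\<dots> = ?v * (real l - 1)" using Rpos by simp
    finally have vw: "?v * (real l - 1) = ?w * (3 * real l - 1)" by simp
    have Usub: "?U \<subseteq> N" using S(1) by blast
    show ?thesis
    proof (rule ccontr)
      assume nc: "\<not> ?thesis"
      have Rb: "R \<le> R * b" using b Rpos by simp
      have lowS: "f (S i) < ?w" if i: "i < l" for i
      proof (rule ccontr)
        assume "\<not> f (S i) < ?w"
        then have "f T \<le> R * f (S i)" using Rpos by (simp add: field_simps)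
        also have "\<dots> \<le> R * b * f (S i)" using Rb sm_nonneg[OF sm S(1)[OF i]] by (simp add: mult_right_mono)
        finally show False using nc S(3)[OF i] i by blast
      qed
      let ?B0 = "T \<inter> ?U"
      have cB0: "card ?B0 \<le> k" using T by (meson card_mono inf_le1 order_trans)
      have lowB0: "f ?B0 < ?w"
      proof (rule ccontr)
        assume "\<not> f ?B0 < ?w"
        then have "f T \<le> R * f ?B0" using Rpos by (simp add: field_simps)
        also have "\<dots> \<le> R * b * f ?B0"
          using Rb sm_nonneg[OF sm, of ?B0] T by (intro mult_right_mono) auto
        finally show False using nc cB0 by blast
      qed
      let ?T' = "T - ?U"
      have T'N: "?T' \<subseteq> N" using T by auto
      have "f (?T' \<union> ?B0) + f (?T' \<inter> ?B0) \<le> f ?T' + f ?B0"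
        using sm_sub[OF sm, of ?T' ?B0] T by auto
      moreover have "?T' \<union> ?B0 = T" by auto
      moreover have "?T' \<inter> ?B0 = {}" by auto
      moreover have "0 \<le> f {}" using sm_nonneg[OF sm] by simp
      ultimately have split: "?v \<le> f ?T' + f ?B0" by simp
      have each: "f (S i \<union> ?T') \<le> ?w + ?w" if i: "i < l" for i
      proof -
        have "f (S i \<union> ?T') \<le> f (S i) + (\<Sum>x\<in>?T'. f (insert x (S i)) - f (S i))"
          using sm_sum[OF sm, of ?T' "S i"] T S(1)[OF i] by auto
        also have "(\<Sum>x\<in>?T'. f (insert x (S i)) - f (S i)) \<le> real (card ?T') * t"
        proof (intro sum_bounded_above)
          fix x assume "x \<in> ?T'"
          then show "f (insert x (S i)) - f (S i) \<le> t" using rj i by (meson less_imp_le)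
        qed
        also have "real (card ?T') * t \<le> real k * t"
        proof -
          have "card ?T' \<le> k" using T by (meson Diff_subset card_mono le_trans)
          then show ?thesis using t by (simp add: mult_right_mono)
        qed
        also have "real k * t \<le> ?w" using lo Rpos by (simp add: field_simps)
        finally show ?thesis using lowS[OF i] by simp
      qed
      have "(real l - 1) * f ?T' + f (?U \<union> ?T') \<le> (\<Sum>i<l. f (S i \<union> ?T'))"
        using sm_disj_sum[OF sm, of l S ?T'] S(1) T'N dj by blast
      also have "\<dots> \<le> (\<Sum>i<l. ?w + ?w)" using each by (intro sum_mono) auto
      finally have A: "(real l - 1) * f ?T' + f (?U \<union> ?T') \<le> real l * (2 * ?w)" by simp
      have "?U \<union> ?T' \<subseteq> N" using Usub T'N by (rule Un_least)
      then have "0 \<le> f (?U \<union> ?T')" by (rule sm_nonneg[OF sm])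
      then have A2: "(real l - 1) * f ?T' \<le> real l * (2 * ?w)" using A by linarith
      have l1: "0 < real l - 1" using l by simp
      have "?v < f ?T' + ?w" using split lowB0 by linarith
      then have B: "(real l - 1) * ?v < (real l - 1) * (f ?T' + ?w)"
        using l1 by (rule mult_strict_left_mono)
      have "(real l - 1) * (f ?T' + ?w) = (real l - 1) * f ?T' + (real l - 1) * ?w"
        by (rule distrib_left)
      moreover have "\<And>w::real. w * (3 * real l - 1) = real l * (2 * w) + (real l - 1) * w"
        by (simp add: algebra_simps)
      then have "?w * (3 * real l - 1) = real l * (2 * ?w) + (real l - 1) * ?w" .
      ultimately show False using B A2 vw by (simp only: mult.commute[of _ "real l - 1"])
    qed
  qed
qed

end

section \<open>Implementation\<close>

definition tau :: "real \<Rightarrow> int \<Rightarrow> real" where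
  "tau b j = b powr (real_of_int j)"

definition Wn :: "real \<Rightarrow> nat \<Rightarrow> real \<Rightarrow> int set" where
  "Wn b k m = {j. m / real k \<le> tau b j \<and> tau b j \<le> m}"

definition enc :: "nat \<Rightarrow> int \<times> nat \<Rightarrow> real" where
  "enc l t = real_of_int (fst t * int (Suc l) + int (snd t))"

definition dec :: "nat \<Rightarrow> real \<Rightarrow> int \<times> nat" where
  "dec l r = (\<lfloor>r\<rfloor> div int (Suc l), nat (\<lfloor>r\<rfloor> mod int (Suc l)))"

definition mdec :: "real list \<Rightarrow> real" where
  "mdec a = (if a = [] then 0 else hd a)"

definition tdec :: "nat \<Rightarrow> real list \<Rightarrow> (int \<times> nat) list" where
  "tdec l a = map (dec l) (tl a)"

definition Pg :: "(int \<times> nat) list \<Rightarrow> nat \<Rightarrow> int \<times> nat \<Rightarrow> nat set" where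
  "Pg ts x t = {p. p < x \<and> ts ! p = t}"

definition okg :: "real \<Rightarrow> nat \<Rightarrow> view \<Rightarrow> (int \<times> nat) list \<Rightarrow> nat \<Rightarrow> int \<Rightarrow> nat \<Rightarrow> bool" where
  "okg b k g ts x j i \<longleftrightarrow> card (Pg ts x (j, i)) < k \<and>
      tau b j \<le> g (insert x (Pg ts x (j, i))) - g (Pg ts x (j, i))"

definition keepf :: "real \<Rightarrow> nat \<Rightarrow> nat \<Rightarrow> real \<Rightarrow> bool \<Rightarrow> int \<times> nat \<Rightarrow> bool" where
  "keepf b k l m' nb t = (if snd t = l then fst t = 0 \<and> \<not> nb else snd t < l \<and> fst t \<in> Wn b k m')"

definition ntf :: "real \<Rightarrow> nat \<Rightarrow> nat \<Rightarrow> view \<Rightarrow> (int \<times> nat) list \<Rightarrow> nat \<Rightarrow> real \<Rightarrow> bool \<Rightarrow> (int \<times> nat) list" where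
  "ntf b k l g ts x m' nb =
     filter (\<lambda>t. find (okg b k g ts x (fst t)) [0..<l] = Some (snd t))
        (List.product (sorted_list_of_set (Wn b k m')) [0..<l]) @ (if nb then [(0, l)] else [])"

definition stp :: "nat \<Rightarrow> real \<Rightarrow> nat \<Rightarrow> view \<Rightarrow> nat \<Rightarrow> real list \<Rightarrow> nat list \<times> real list" where
  "stp l b k g n a =
    (let m = mdec a; ts = tdec l a; x = n - 1; m' = max m (g {x}); nb = (m < g {x});
         old = filter (\<lambda>p. keepf b k l m' nb (ts ! p)) [0..<x];
         nt = ntf b k l g ts x m' nb
     in (old @ replicate (length nt) x, m' # map (enc l) (map (\<lambda>p. ts ! p) old @ nt)))"

definition dstep :: "nat \<Rightarrow> real \<Rightarrow> nat \<Rightarrow> ('a set \<Rightarrow> real) \<Rightarrow> 'a list \<times> real list \<Rightarrow> 'a \<Rightarrow> 'a list \<times> real list" where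
  "dstep l b k f s x = (case s of (M, a) \<Rightarrow>
     (case stp l b k (view_of f (M @ [x])) (length (M @ [x])) a of (is, a') \<Rightarrow> (select (M @ [x]) is, a')))"

definition msing :: "('a set \<Rightarrow> real) \<Rightarrow> 'a list \<Rightarrow> real" where
  "msing f p = Max (insert 0 ((\<lambda>x. f {x}) ` set p))"

definition Pos :: "'a list \<Rightarrow> (int \<times> nat) list \<Rightarrow> int \<times> nat \<Rightarrow> nat set" where
  "Pos M ts t = {p. p < length M \<and> ts ! p = t}"

definition Inv :: "nat \<Rightarrow> real \<Rightarrow> nat \<Rightarrow> ('a set \<Rightarrow> real) \<Rightarrow> 'a list \<Rightarrow> 'a list \<times> real list \<Rightarrow> bool" where
  "Inv l b k f p s = (case s of (M, a) \<Rightarrow>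
     length (tdec l a) = length M \<and> mdec a = msing f p \<and> set M \<subseteq> set p \<and>
     (\<forall>t\<in>set (tdec l a). t = (0, l) \<or> (snd t < l \<and> fst t \<in> Wn b k (msing f p))) \<and>
     (\<forall>j\<in>Wn b k (msing f p). \<forall>i<l.
         (\<lambda>q. M ! q) ` Pos M (tdec l a) (j, i) = ideal f k l (tau b) p j i \<and>
         card (Pos M (tdec l a) (j, i)) = card (ideal f k l (tau b) p j i)) \<and>
     card (Pos M (tdec l a) (0, l)) \<le> 1 \<and>
     (0 < msing f p \<longrightarrow> (\<exists>y\<in>(\<lambda>q. M ! q) ` Pos M (tdec l a) (0, l). f {y} = msing f p)))"

lemma divmod_aux:
  fixes j i d :: int
  assumes "0 \<le> i" "i < d"
  shows "(j * d + i) div d = j" "(j * d + i) mod d = i"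
proof -
  have d: "d \<noteq> 0" using assms by simp
  have "(j * d + i) div d = j + i div d" using d by (rule div_mult_self3)
  also have "i div d = 0" using assms by (rule div_pos_pos_trivial)
  finally show "(j * d + i) div d = j" by simp
  have "(j * d + i) mod d = i mod d" by (rule mod_mult_self3)
  also have "i mod d = i" using assms by (rule mod_pos_pos_trivial)
  finally show "(j * d + i) mod d = i" .
qed

lemma dec_enc:
  assumes "snd t \<le> l" shows "dec l (enc l t) = t"
proof -
  obtain j i where t: "t = (j, i)" by (cases t)
  have fl: "\<lfloor>enc l t\<rfloor> = j * int (Suc l) + int i" unfolding enc_def t by (simp only: floor_of_int fst_conv snd_conv)
  have i: "int i < int (Suc l)" using assms t by simp
  have i0: "0 \<le> int i" by simp
  show ?thesis unfolding dec_def fl divmod_aux[OF i0 i] by (simp add: t)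
qed

lemma tau_pos: "1 < b \<Longrightarrow> 0 < tau b j"
  by (simp add: tau_def)

lemma Wn_bounds:
  assumes b: "1 < b" and k: "1 \<le> k" and j: "j \<in> Wn b k m"
  shows "0 < m" "log b (m / real k) \<le> real_of_int j" "real_of_int j \<le> log b m"
proof -
  have t: "0 < tau b j" using tau_pos[OF b] .
  have j1: "m / real k \<le> tau b j" and j2: "tau b j \<le> m" using j unfolding Wn_def by auto
  show m: "0 < m" using j2 t by linarith
  have mk: "0 < m / real k" using m k by simp
  have lt: "log b (tau b j) = real_of_int j" unfolding tau_def using b by (intro log_powr_cancel) auto
  have "log b (m / real k) \<le> log b (tau b j)" by (subst log_le_cancel_iff[OF b mk t]) (rule j1)
  then show "log b (m / real k) \<le> real_of_int j" unfolding lt .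
  have "log b (tau b j) \<le> log b m" by (subst log_le_cancel_iff[OF b t m]) (rule j2)
  then show "real_of_int j \<le> log b m" unfolding lt .
qed

lemma Wn_sub:
  assumes b: "1 < b" and k: "1 \<le> k"
  shows "Wn b k m \<subseteq> {\<lceil>log b (m / real k)\<rceil> .. \<lfloor>log b m\<rfloor>}"
proof
  fix j assume j: "j \<in> Wn b k m"
  have "\<lceil>log b (m / real k)\<rceil> \<le> j" unfolding ceiling_le_iff by (rule Wn_bounds(2)[OF b k j])
  moreover have "j \<le> \<lfloor>log b m\<rfloor>" unfolding le_floor_iff by (rule Wn_bounds(3)[OF b k j])
  ultimately show "j \<in> {\<lceil>log b (m / real k)\<rceil> .. \<lfloor>log b m\<rfloor>}" by simp
qed

lemma Wn_finite: "1 < b \<Longrightarrow> 1 \<le> k \<Longrightarrow> finite (Wn b k m)"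
  by (rule finite_subset[OF Wn_sub]) auto

lemma Wn_card:
  assumes b: "1 < b" and k: "1 \<le> k"
  shows "real (card (Wn b k m)) \<le> log b (real k) + 1"
proof (cases "0 < m")
  case False
  then have "Wn b k m = {}" using Wn_bounds(1)[OF b k] by blast
  then show ?thesis using b k by simp
next
  case True
  let ?a = "\<lceil>log b (m / real k)\<rceil>" and ?c = "\<lfloor>log b m\<rfloor>"
  have "card (Wn b k m) \<le> card {?a..?c}" using Wn_sub[OF b k] by (rule card_mono[rotated]) simp
  also have "\<dots> = nat (?c + 1 - ?a)" by simp
  finally have c: "real (card (Wn b k m)) \<le> real (nat (?c + 1 - ?a))" by simp
  have lg: "log b (m / real k) = log b m - log b (real k)"
    using True k b by (simp add: log_divide)
  have z: "real_of_int (?c + 1 - ?a) \<le> log b (real k) + 1"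
  proof -
    have "real_of_int ?c \<le> log b m" by (rule of_int_floor_le)
    moreover have "log b (m / real k) \<le> real_of_int ?a" by (rule le_of_int_ceiling)
    moreover have "real_of_int (?c + 1 - ?a) = real_of_int ?c + 1 - real_of_int ?a" by simp
    ultimately show ?thesis using lg by linarith
  qed
  have l0: "0 \<le> log b (real k)" using b k by simp
  have "real (nat (?c + 1 - ?a)) \<le> log b (real k) + 1"
  proof (cases "0 \<le> ?c + 1 - ?a")
    case True
    then have "real (nat (?c + 1 - ?a)) = real_of_int (?c + 1 - ?a)" by (simp only: of_nat_nat)
    then show ?thesis using z by simp
  next
    case False
    then have "nat (?c + 1 - ?a) = 0" by simp
    then show ?thesis using l0 by simp
  qed
  then show ?thesis using c by (rule order_trans[rotated])
qed

lemma count_list_card: "count_list xs t = card {p. p < length xs \<and> xs ! p = t}"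
proof -
  have "count_list xs t = length (filter (\<lambda>s. s = t) xs)" by (induction xs) auto
  then show ?thesis by (simp add: length_filter_conv_card)
qed

lemma count_list_distinct: "distinct xs \<Longrightarrow> count_list xs t = (if t \<in> set xs then 1 else 0)"
  by (induction xs) auto

lemma zip_map_same: "zip (map f xs) (map g xs) = map (\<lambda>x. (f x, g x)) xs"
  by (induction xs) auto

lemma zip_replicate_same: "length ys = n \<Longrightarrow> zip (replicate n x) ys = map (Pair x) ys"
  by (induction ys arbitrary: n) auto

lemma image_Pos: "length ts = length M \<Longrightarrow> (\<lambda>q. M ! q) ` Pos M ts t = {y. (y, t) \<in> set (zip M ts)}"
  by (auto simp: Pos_def set_zip)

lemma card_Pos: "length ts = length M \<Longrightarrow> card (Pos M ts t) = count_list ts t"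
  by (simp add: Pos_def count_list_card)

lemma msing_snoc: "msing f (p @ [x]) = max (f {x}) (msing f p)"
proof -
  have e1: "insert 0 ((\<lambda>x. f {x}) ` set (p @ [x])) = insert (f {x}) (insert 0 ((\<lambda>x. f {x}) ` set p))"
    by auto
  have e2: "Max (insert (f {x}) (insert 0 ((\<lambda>x. f {x}) ` set p))) = max (f {x}) (Max (insert 0 ((\<lambda>x. f {x}) ` set p)))"
    by (rule Max_insert) auto
  show ?thesis unfolding msing_def e1 e2 by (rule refl)
qed

lemma msing_ge: "y \<in> set p \<Longrightarrow> f {y} \<le> msing f p"
  unfolding msing_def by (rule Max_ge) auto

lemma msing_nonneg: "0 \<le> msing f p"
  unfolding msing_def by (rule Max_ge) auto

lemma msing_Nil[simp]: "msing f [] = 0"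
  by (simp add: msing_def)

lemma count_list_map_filter: "count_list (map h xs) t = length (filter (\<lambda>q. h q = t) xs)"
  by (induction xs) auto

lemma step_inv:
  assumes sm: "nonneg_submodular_on N f" and b: "1 < b" and k: "1 \<le> k"
    and inv: "Inv l b k f p (M, a)" and dp: "distinct (p @ [x])" and pN: "set (p @ [x]) \<subseteq> N"
  shows "Inv l b k f (p @ [x]) (dstep l b k f (M, a) x)"
proof -
  define L where "L = M @ [x]"
  define g where "g = view_of f L"
  define n where "n = length L"
  define m where "m = mdec a"
  define ts where "ts = tdec l a"
  define xp where "xp = length M"
  have n1: "n - 1 = xp" by (simp add: n_def L_def xp_def)
  define m' where "m' = max m (g {xp})"
  define nb where "nb = (m < g {xp})"
  define kp where "kp = keepf b k l m' nb"
  define old where "old = filter (\<lambda>p. kp (ts ! p)) [0..<xp]"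
  define nt where "nt = ntf b k l g ts xp m' nb"
  have stp_eq: "stp l b k g n a = (old @ replicate (length nt) xp, m' # map (enc l) (map (\<lambda>p. ts ! p) old @ nt))"
    unfolding stp_def Let_def m_def[symmetric] ts_def[symmetric] n1 m'_def[symmetric] nb_def[symmetric]
      kp_def[symmetric] old_def[symmetric] nt_def[symmetric] by (rule refl)
  from inv have I1: "length ts = length M" and I2: "m = msing f p" and I3: "set M \<subseteq> set p"
    and I4: "\<forall>t\<in>set ts. t = (0, l) \<or> (snd t < l \<and> fst t \<in> Wn b k m)"
    and I5: "\<forall>j\<in>Wn b k m. \<forall>i<l. (\<lambda>q. M ! q) ` Pos M ts (j, i) = ideal f k l (tau b) p j i \<and>
         card (Pos M ts (j, i)) = card (ideal f k l (tau b) p j i)"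
    and I6: "card (Pos M ts (0, l)) \<le> 1"
    and I7: "0 < m \<longrightarrow> (\<exists>y\<in>(\<lambda>q. M ! q) ` Pos M ts (0, l). f {y} = m)"
    unfolding Inv_def m_def ts_def by auto
  have xnp: "x \<notin> set p" using dp by simp
  have pN': "set p \<subseteq> N" "x \<in> N" using pN by auto
  have f0: "0 \<le> f {}" using sm_nonneg[OF sm] by simp
  have gI: "g I = f ((\<lambda>q. M ! q) ` I)" if "I \<subseteq> {..<xp}" for I
  proof -
    have "I \<inter> {..<length L} = I" using that by (auto simp: L_def xp_def)
    moreover have "(\<lambda>i. L ! i) ` I = (\<lambda>q. M ! q) ` I" using that
      by (intro image_cong) (auto simp: L_def xp_def nth_append)
    ultimately show ?thesis by (simp add: g_def view_of_def)
  qed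
  have gIx: "g (insert xp I) = f (insert x ((\<lambda>q. M ! q) ` I))" if "I \<subseteq> {..<xp}" for I
  proof -
    have "insert xp I \<inter> {..<length L} = insert xp I" using that by (auto simp: L_def xp_def)
    moreover have "(\<lambda>i. L ! i) ` I = (\<lambda>q. M ! q) ` I" using that
      by (intro image_cong) (auto simp: L_def xp_def nth_append)
    moreover have "L ! xp = x" by (simp add: L_def xp_def)
    ultimately show ?thesis by (simp add: g_def view_of_def)
  qed
  have gx: "g {xp} = f {x}" using gIx[of "{}"] by simp
  have Pg_eq: "Pg ts xp t = Pos M ts t" for t by (simp add: Pg_def Pos_def xp_def)
  have Pos_sub: "Pos M ts t \<subseteq> {..<xp}" for t by (auto simp: Pos_def xp_def)
  have mm': "m' = msing f (p @ [x])" unfolding m'_def msing_snoc gx I2 by simp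
  have mle: "m \<le> m'" by (simp add: m'_def)
  have kpos: "0 < real k" using k by simp
  have stored: "(\<lambda>q. M ! q) ` Pos M ts (j, i) = ideal f k l (tau b) p j i \<and>
         card (Pos M ts (j, i)) = card (ideal f k l (tau b) p j i)"
    if j: "j \<in> Wn b k m'" and i: "i < l" for j i
  proof (cases "j \<in> Wn b k m")
    case True then show ?thesis using I5 i by blast
  next
    case False
    have "m' / real k \<le> tau b j" "tau b j \<le> m'" using j by (auto simp: Wn_def)
    moreover have "m / real k \<le> m' / real k" using mle kpos by (simp add: divide_right_mono)
    ultimately have mt: "m < tau b j" using False by (auto simp: Wn_def)
    have P0: "Pos M ts (j, i) = {}"
    proof -
      { fix q assume q: "q \<in> Pos M ts (j, i)"
        then have "ts ! q \<in> set ts" using I1 unfolding Pos_def by (metis (mono_tags, lifting) mem_Collect_eq nth_mem)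
        then have "(j, i) = (0, l) \<or> (i < l \<and> j \<in> Wn b k m)" using I4 q by (auto simp: Pos_def)
        then have False using i False by auto }
      then show ?thesis by blast
    qed
    have "\<forall>y\<in>set p. f {y} < tau b j" using msing_ge[of _ p f] I2 mt by fastforce
    then show ?thesis using P0 ideal_empty[of f p "tau b" j k l i] f0 by simp
  qed
  have okeq: "okg b k g ts xp j i = okp f k (tau b j) (ideal f k l (tau b) p j i) x"
    if j: "j \<in> Wn b k m'" and i: "i < l" for j i
    using stored[OF j i] unfolding okg_def okp_def Pg_eq gI[OF Pos_sub] gIx[OF Pos_sub] by simp
  have findeq: "find (okg b k g ts xp j) [0..<l] = find (\<lambda>i'. okp f k (tau b j) (ideal f k l (tau b) p j i') x) [0..<l]"
    if j: "j \<in> Wn b k m'" for j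
    by (rule find_cong) (auto simp: okeq[OF j])
  have finW: "finite (Wn b k m')" by (rule Wn_finite[OF b k])
  have setnt: "t \<in> set nt \<longleftrightarrow> (fst t \<in> Wn b k m' \<and> snd t < l \<and> find (okg b k g ts xp (fst t)) [0..<l] = Some (snd t))
      \<or> (nb \<and> t = (0, l))" for t
    by (cases t) (auto simp: nt_def ntf_def finW)
  have dnt: "distinct nt"
    by (auto simp: nt_def ntf_def finW intro!: distinct_filter distinct_product)
  have oldset: "set old = {q. q < xp \<and> kp (ts ! q)}" by (auto simp: old_def)
  have oldtags: "snd (ts ! q) \<le> l" "ts ! q = (0, l) \<or> (snd (ts ! q) < l \<and> fst (ts ! q) \<in> Wn b k m')"
    if "q \<in> set old" for q
    using that unfolding oldset kp_def keepf_def by (auto split: if_splits simp: prod_eq_iff)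
  have nttags: "snd t \<le> l" "t = (0, l) \<or> (snd t < l \<and> fst t \<in> Wn b k m')" if "t \<in> set nt" for t
    using that setnt by auto
  define M' where "M' = map (\<lambda>q. M ! q) old @ replicate (length nt) x"
  define tl' where "tl' = map (\<lambda>q. ts ! q) old @ nt"
  have sel: "select L (old @ replicate (length nt) xp) = M'"
  proof -
    have "filter (\<lambda>i. i < length L) (old @ replicate (length nt) xp) = old @ replicate (length nt) xp"
      by (rule filter_True) (auto simp: oldset L_def xp_def)
    moreover have "map (\<lambda>i. L ! i) old = map (\<lambda>q. M ! q) old"
      by (rule map_cong) (auto simp: oldset L_def xp_def nth_append)
    moreover have "map (\<lambda>i. L ! i) (replicate (length nt) xp) = replicate (length nt) x"
      by (simp add: L_def xp_def)
    ultimately show ?thesis by (simp add: select_def M'_def)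
  qed
  have ds: "dstep l b k f (M, a) x = (M', m' # map (enc l) tl')"
  proof -
    have "dstep l b k f (M, a) x = (case stp l b k g n a of (is, a') \<Rightarrow> (select L is, a'))"
      by (simp only: dstep_def L_def g_def n_def prod.case)
    then show ?thesis unfolding stp_eq tl'_def using sel by simp
  qed
  have tdec': "tdec l (m' # map (enc l) tl') = tl'"
  proof -
    have "map (dec l) (map (enc l) tl') = tl'"
      unfolding map_map
    proof (rule map_idI)
      fix t assume "t \<in> set tl'"
      then have "t \<in> (\<lambda>q. ts ! q) ` set old \<or> t \<in> set nt" by (simp add: tl'_def)
      then have "snd t \<le> l" by (metis imageE oldtags(1) nttags(1))
      then show "(dec l \<circ> enc l) t = t" by (simp add: dec_enc)
    qed
    then show ?thesis by (simp add: tdec_def)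
  qed
  have mdec': "mdec (m' # map (enc l) tl') = m'" by (simp add: mdec_def)
  have lens: "length tl' = length M'" by (simp add: tl'_def M'_def)
  have zipeq: "set (zip M' tl') = (\<lambda>q. (M ! q, ts ! q)) ` set old \<union> Pair x ` set nt"
    unfolding M'_def tl'_def by (simp add: zip_append zip_map_same zip_replicate_same)
  have imgP: "(\<lambda>q. M' ! q) ` Pos M' tl' t =
      (if kp t then (\<lambda>q. M ! q) ` Pos M ts t else {}) \<union> (if t \<in> set nt then {x} else {})" for t
  proof -
    have "(\<lambda>q. M' ! q) ` Pos M' tl' t = {y. (y, t) \<in> set (zip M' tl')}"
      using lens by (rule image_Pos)
    also have "\<dots> = (\<lambda>q. M ! q) ` {q \<in> set old. ts ! q = t} \<union> (if t \<in> set nt then {x} else {})"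
      unfolding zipeq by auto
    also have "{q \<in> set old. ts ! q = t} = (if kp t then Pos M ts t else {})"
      unfolding oldset by (auto simp: Pos_def xp_def)
    finally show ?thesis by simp
  qed
  have cardP: "card (Pos M' tl' t) = (if kp t then card (Pos M ts t) else 0) + (if t \<in> set nt then 1 else 0)" for t
  proof -
    have "card (Pos M' tl' t) = count_list tl' t" using lens by (rule card_Pos)
    also have "\<dots> = count_list (map (\<lambda>q. ts ! q) old) t + count_list nt t" by (simp add: tl'_def)
    also have "count_list nt t = (if t \<in> set nt then 1 else 0)" using dnt by (rule count_list_distinct)
    also have "count_list (map (\<lambda>q. ts ! q) old) t = (if kp t then count_list ts t else 0)"
    proof -
      have "count_list (map (\<lambda>q. ts ! q) old) t = length (filter (\<lambda>q. ts ! q = t) old)"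
        by (rule count_list_map_filter)
      also have "filter (\<lambda>q. ts ! q = t) old = (if kp t then filter (\<lambda>q. ts ! q = t) [0..<xp] else [])"
        unfolding old_def filter_filter by (auto intro: filter_cong simp: filter_empty_conv)
      also have "count_list ts t = length (filter (\<lambda>q. ts ! q = t) [0..<xp])"
      proof -
        have "map (\<lambda>q. ts ! q) [0..<length ts] = ts" by (rule map_nth)
        then have "count_list ts t = count_list (map (\<lambda>q. ts ! q) [0..<length ts]) t" by simp
        also have "\<dots> = length (filter (\<lambda>q. ts ! q = t) [0..<length ts])" by (rule count_list_map_filter)
        finally show ?thesis using I1 by (simp add: xp_def)
      qed
      ultimately show ?thesis by simp
    qed
    also have "count_list ts t = card (Pos M ts t)" using I1 by (simp add: card_Pos)
    finally show ?thesis .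
  qed
  have idl: "ideal f k l (tau b) (p @ [x]) j i =
     (if find (\<lambda>i'. okp f k (tau b j) (ideal f k l (tau b) p j i') x) [0..<l] = Some i
      then insert x (ideal f k l (tau b) p j i) else ideal f k l (tau b) p j i)" for j i
    by (simp add: ideal_snoc istep_def)
  have C4: "\<forall>t\<in>set tl'. t = (0, l) \<or> (snd t < l \<and> fst t \<in> Wn b k (msing f (p @ [x])))"
    unfolding mm'[symmetric]
  proof
    fix t assume "t \<in> set tl'"
    then have "t \<in> (\<lambda>q. ts ! q) ` set old \<or> t \<in> set nt" by (simp add: tl'_def)
    then show "t = (0, l) \<or> (snd t < l \<and> fst t \<in> Wn b k m')" by (metis imageE oldtags(2) nttags(2))
  qed
  have C5: "(\<lambda>q. M' ! q) ` Pos M' tl' (j, i) = ideal f k l (tau b) (p @ [x]) j i \<and>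
         card (Pos M' tl' (j, i)) = card (ideal f k l (tau b) (p @ [x]) j i)"
    if j: "j \<in> Wn b k m'" and i: "i < l" for j i
  proof -
    have kpt: "kp (j, i)" using j i by (simp add: kp_def keepf_def)
    have mem: "(j, i) \<in> set nt \<longleftrightarrow> find (\<lambda>i'. okp f k (tau b j) (ideal f k l (tau b) p j i') x) [0..<l] = Some i"
      using setnt[of "(j, i)"] j i findeq[OF j] by auto
    have xn: "x \<notin> ideal f k l (tau b) p j i" using ideal_sub xnp by fastforce
    show ?thesis
      using stored[OF j i] imgP[of "(j, i)"] cardP[of "(j, i)"] kpt mem xn
        ideal_fin[of f k l "tau b" p j i] unfolding idl by auto
  qed
  have C6: "card (Pos M' tl' (0, l)) \<le> 1"
  proof -
    have "kp (0, l) = (\<not> nb)" by (simp add: kp_def keepf_def)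
    moreover have "(0, l) \<in> set nt \<longleftrightarrow> nb" using setnt[of "(0, l)"] by auto
    ultimately show ?thesis using cardP[of "(0, l)"] I6 by auto
  qed
  have C7: "0 < m' \<longrightarrow> (\<exists>y\<in>(\<lambda>q. M' ! q) ` Pos M' tl' (0, l). f {y} = m')"
  proof (cases nb)
    case True
    then have "(0, l) \<in> set nt" using setnt by auto
    then have "x \<in> (\<lambda>q. M' ! q) ` Pos M' tl' (0, l)" using imgP[of "(0, l)"] by auto
    moreover have "f {x} = m'" using True gx by (simp add: m'_def nb_def)
    ultimately show ?thesis by blast
  next
    case False
    then have kp0: "kp (0, l)" by (simp add: kp_def keepf_def)
    have "m' = m" using False by (simp add: m'_def nb_def)
    then show ?thesis using I7 imgP[of "(0, l)"] kp0 by auto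
  qed
  have C3: "set M' \<subseteq> set (p @ [x])"
  proof -
    have "set (map (\<lambda>q. M ! q) old) \<subseteq> set M" by (auto simp: oldset xp_def)
    then show ?thesis using I3 by (auto simp: M'_def)
  qed
  show ?thesis
    unfolding ds Inv_def prod.case tdec' mdec' mm'[symmetric]
    using lens C3 C4 C5 C6 C7 mm' by auto
qed

lemma run_from_det:
  assumes st: "\<And>g n a. st k g n a = return_pmf (stp l b k g n a)"
  shows "run_from st k f s xs = return_pmf (foldl (dstep l b k f) s xs)"
proof (induction xs arbitrary: s)
  case Nil then show ?case by (cases s) simp
next
  case (Cons x xs)
  obtain M a where s: "s = (M, a)" by (cases s)
  obtain js a' where e: "stp l b k (view_of f (M @ [x])) (length (M @ [x])) a = (js, a')" by (cases "stp l b k (view_of f (M @ [x])) (length (M @ [x])) a")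
  have d: "dstep l b k f (M, a) x = (select (M @ [x]) js, a')" by (simp only: dstep_def e prod.case)
  have "run_from st k f (M, a) (x # xs) = run_from st k f (select (M @ [x]) js, a') xs"
    by (simp only: run_from.simps st e bind_return_pmf prod.case)
  then show ?case using Cons.IH by (simp add: s d)
qed

lemma Inv_init: "Inv l b k f [] ([], [])"
  by (simp add: Inv_def tdec_def mdec_def Pos_def)

lemma Inv_prefix:
  assumes sm: "nonneg_submodular_on N f" and b: "1 < b" and k: "1 \<le> k"
  shows "distinct p \<Longrightarrow> set p \<subseteq> N \<Longrightarrow> Inv l b k f p (foldl (dstep l b k f) ([], []) p)"
proof (induction p rule: rev_induct)
  case Nil then show ?case by (simp add: Inv_init)
next
  case (snoc x p)
  obtain M a where e: "foldl (dstep l b k f) ([], []) p = (M, a)" by (cases "foldl (dstep l b k f) ([], []) p")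
  have "Inv l b k f p (M, a)" using snoc e by auto
  then have "Inv l b k f (p @ [x]) (dstep l b k f (M, a) x)"
    using step_inv[OF sm b k] snoc.prems by blast
  then show ?case using e by simp
qed

lemma Inv_mem:
  assumes b: "1 < b" and k: "1 \<le> k" and inv: "Inv l b k f p (M, a)"
  shows "length M \<le> k * (card (Wn b k (msing f p)) * l + 1)" "length a \<le> length M + 1"
proof -
  let ?W = "Wn b k (msing f p)"
  let ?ts = "tdec l a"
  let ?TS = "?W \<times> {..<l} \<union> {(0, l)}"
  from inv have I1: "length ?ts = length M"
    and I4: "\<forall>t\<in>set ?ts. t = (0, l) \<or> (snd t < l \<and> fst t \<in> ?W)"
    and I5: "\<forall>j\<in>?W. \<forall>i<l. card (Pos M ?ts (j, i)) = card (ideal f k l (tau b) p j i)"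
    and I6: "card (Pos M ?ts (0, l)) \<le> 1"
    unfolding Inv_def by auto
  have finW: "finite ?W" by (rule Wn_finite[OF b k])
  have finTS: "finite ?TS" using finW by simp
  have sub: "set ?ts \<subseteq> ?TS" using I4 by (auto simp: mem_Times_iff)
  have "length M = (\<Sum>t\<in>?TS. count_list ?ts t)" using sum_count_set[OF sub finTS] I1 by simp
  also have "\<dots> \<le> (\<Sum>t\<in>?TS. k)"
  proof (rule sum_mono)
    fix t assume t: "t \<in> ?TS"
    have "count_list ?ts t = card (Pos M ?ts t)" using I1 by (simp add: card_Pos)
    also have "\<dots> \<le> k"
    proof (cases "t = (0, l)")
      case True then show ?thesis using I6 k by simp
    next
      case False
      then obtain j i where "t = (j, i)" "j \<in> ?W" "i < l" using t by auto
      then show ?thesis using I5 ideal_card[of f k l "tau b" p j i] by simp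
    qed
    finally show "count_list ?ts t \<le> k" .
  qed
  also have "\<dots> = card ?TS * k" by simp
  also have "card ?TS \<le> card ?W * l + 1"
  proof -
    have "card ?TS \<le> card (?W \<times> {..<l}) + card {(0::int, l)}" by (rule card_Un_le)
    then show ?thesis by (simp add: card_cartesian_product)
  qed
  then have "card ?TS * k \<le> (card ?W * l + 1) * k" by (rule mult_right_mono) simp
  finally show "length M \<le> k * (card ?W * l + 1)" by (simp add: mult.commute)
  have "length (tl a) = length M" using I1 by (simp add: tdec_def)
  then show "length a \<le> length M + 1" by simp
qed

lemma Inv_approx:
  assumes sm: "nonneg_submodular_on (set xs) f" and dx: "distinct xs" and b: "1 < b" and k: "1 \<le> k"
    and l: "2 \<le> l" and R: "R * (real l - 1) = 3 * real l - 1" and Rb: "R * b \<le> c"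
    and inv: "Inv l b k f xs (M, a)" and T: "T \<subseteq> set xs" "card T \<le> k"
  shows "\<exists>B \<subseteq> set M. card B \<le> k \<and> f T \<le> c * f B"
proof -
  define m where "m = msing f xs"
  let ?ts = "tdec l a"
  from inv have I5: "\<forall>j\<in>Wn b k m. \<forall>i<l. (\<lambda>q. M ! q) ` Pos M ?ts (j, i) = ideal f k l (tau b) xs j i"
    and I7: "0 < m \<longrightarrow> (\<exists>y\<in>(\<lambda>q. M ! q) ` Pos M ?ts (0, l). f {y} = m)"
    unfolding Inv_def m_def by auto
  have imgM: "(\<lambda>q. M ! q) ` Pos M ?ts t \<subseteq> set M" for t by (auto simp: Pos_def)
  have R1: "1 \<le> R"
  proof (rule ccontr)
    assume "\<not> 1 \<le> R"
    then have "R * (real l - 1) \<le> 1 * (real l - 1)" using l by (intro mult_right_mono) auto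
    then show False using R l by simp
  qed
  have bpos: "0 < b" using b by simp
  have c1: "1 \<le> c"
  proof -
    have "1 * 1 \<le> R * b" using R1 b by (intro mult_mono) auto
    then show ?thesis using Rb by simp
  qed
  have f0: "0 \<le> f {}" using sm_nonneg[OF sm] by simp
  have m0: "0 \<le> m" unfolding m_def by (rule msing_nonneg)
  have finT: "finite T" using T(1) finite_subset by blast
  have fT0: "0 \<le> f T" using sm_nonneg[OF sm T(1)] .
  show ?thesis
  proof (cases "T = {} \<or> f T \<le> c * m")
    case True
    show ?thesis
    proof (cases "T = {}")
      case True
      have "f {} \<le> c * f {}" using c1 f0 by (simp add: mult_le_cancel_right1)
      then show ?thesis using True by (intro exI[of _ "{}"]) auto
    next
      case False
      then have le: "f T \<le> c * m" using \<open>T = {} \<or> f T \<le> c * m\<close> by simp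
      show ?thesis
      proof (cases "0 < m")
        case True
        then obtain y where y: "y \<in> set M" "f {y} = m" using I7 imgM by blast
        then show ?thesis using le k by (intro exI[of _ "{y}"]) auto
      next
        case False
        then have "f T \<le> 0" using le m0 c1 by (simp add: mult_le_0_iff)
        then have "f T \<le> c * f {}" using c1 f0 by (smt (verit) mult_nonneg_nonneg)
        then show ?thesis by (intro exI[of _ "{}"]) auto
      qed
    qed
  next
    case False
    then have Tne: "T \<noteq> {}" and big: "c * m < f T" by auto
    let ?v = "f T"
    have vpos: "0 < ?v" using big c1 m0 by (smt (verit) mult_nonneg_nonneg)
    have vkm: "?v \<le> real k * m"
    proof -
      have "f ({} \<union> T) \<le> f {} + (\<Sum>x\<in>T. f (insert x {}) - f {})"
        by (rule sm_sum[OF sm finT]) (auto simp: T)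
      also have "(\<Sum>x\<in>T. f (insert x {}) - f {}) \<le> real (card T) * (m - f {})"
      proof (rule sum_bounded_above)
        fix x assume "x \<in> T"
        then have "f {x} \<le> m" unfolding m_def using T(1) by (intro msing_ge) auto
        then show "f (insert x {}) - f {} \<le> m - f {}" by simp
      qed
      finally have a: "?v \<le> f {} + real (card T) * (m - f {})" by simp
      have cT: "1 \<le> real (card T)" using Tne finT by (simp add: Suc_le_eq card_gt_0_iff)
      have "0 \<le> (real (card T) - 1) * f {}" using cT f0 by simp
      then have "?v \<le> real (card T) * m" using a by (simp add: algebra_simps)
      also have "\<dots> \<le> real k * m" using T(2) m0 by (intro mult_right_mono) auto
      finally show ?thesis .
    qed
    have kpos: "0 < real k" using k by simp
    define y where "y = ?v / (R * real k)"
    have ypos: "0 < y" using vpos R1 kpos by (simp add: y_def)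
    define j where "j = \<lfloor>log b y\<rfloor>"
    define t where "t = tau b j"
    have tpos: "0 < t" unfolding t_def by (rule tau_pos[OF b])
    have ty: "t \<le> y"
    proof -
      have "t \<le> b powr (log b y)" unfolding t_def tau_def j_def using b
        by (subst powr_le_cancel_iff) auto
      then show ?thesis using b ypos by simp
    qed
    have yt: "y < b * t"
    proof -
      have "log b y < real_of_int j + 1" unfolding j_def by (rule real_of_int_floor_add_one_gt)
      then have "b powr (log b y) < b powr (real_of_int j + 1)" using b by (intro powr_less_mono) auto
      also have "b powr (real_of_int j + 1) = b * t" using bpos by (simp add: t_def tau_def powr_add)
      finally show ?thesis using b ypos by simp
    qed
    have vy: "?v = R * real k * y" using R1 kpos by (simp add: y_def)
    have t_le_m: "t \<le> m"
    proof -
      have "y \<le> m / R" unfolding y_def using vkm R1 kpos by (simp add: field_simps)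
      also have "m / R \<le> m"
      proof -
        have "1 * m \<le> R * m" using R1 m0 by (rule mult_right_mono)
        then show ?thesis using R1 by (simp add: divide_le_eq mult.commute)
      qed
      finally show ?thesis using ty by simp
    qed
    have m_le_t: "m / real k \<le> t"
    proof -
      have "R * b * m \<le> c * m" using Rb m0 by (rule mult_right_mono)
      also have "\<dots> < ?v" by (rule big)
      also have "\<dots> = R * real k * y" by (rule vy)
      also have "\<dots> < R * real k * (b * t)" using yt R1 kpos by (intro mult_strict_left_mono) auto
      finally have "R * b * m < R * b * (real k * t)" by (simp add: algebra_simps)
      then have "m < real k * t" using R1 bpos by (simp add: mult_less_cancel_left_pos)
      then show ?thesis using kpos by (simp add: divide_le_eq mult.commute)
    qed
    have jW: "j \<in> Wn b k m" using t_le_m m_le_t by (simp add: Wn_def t_def)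
    let ?S = "ideal f k l (tau b) xs j"
    have "\<exists>B. B \<subseteq> (\<Union>i<l. ?S i) \<and> card B \<le> k \<and> f T \<le> R * b * f B"
    proof (rule core_approx[OF sm T(1) finT T(2) l R b[THEN less_imp_le] tpos])
      show "?S i \<subseteq> set xs" for i by (rule ideal_sub)
      show "finite (?S i)" for i by (rule ideal_fin)
      show "card (?S i) \<le> k" for i by (rule ideal_card)
      show "?S i \<inter> ?S i' = {}" if "i \<noteq> i'" for i i' using ideal_disj[OF dx that] .
      show "t * card (?S i) \<le> f (?S i)" for i
        using ideal_val[OF sm dx subset_refl, of "tau b" j k l i] f0 by (simp add: t_def)
      show "\<forall>x \<in> T - (\<Union>i<l. ?S i). \<forall>i<l. f (insert x (?S i)) - f (?S i) < t"
        if sm0: "\<forall>i<l. card (?S i) < k"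
      proof (intro ballI allI impI)
        fix x i assume x: "x \<in> T - (\<Union>i<l. ?S i)" and i: "i < l"
        have xs: "x \<in> set xs" using x T(1) by blast
        have nx: "x \<notin> ?S i'" if "i' < l" for i' using x that by blast
        have sc: "card (?S i') < k" if "i' < l" for i' using sm0 that by blast
        show "f (insert x (?S i)) - f (?S i) < t"
          unfolding t_def by (rule ideal_rej[OF sm dx subset_refl xs nx sc i])
      qed
      show "f T \<le> R * b * (real k * t)"
      proof -
        have "R * real k * y \<le> R * real k * (b * t)" using yt R1 kpos by (intro mult_left_mono) auto
        then show ?thesis using vy by (simp add: algebra_simps)
      qed
      show "real k * t * R \<le> f T"
      proof -
        have "R * real k * t \<le> R * real k * y" using ty R1 kpos by (intro mult_left_mono) auto
        then show ?thesis using vy by (simp add: algebra_simps)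
      qed
    qed
    then obtain B where B: "B \<subseteq> (\<Union>i<l. ?S i)" "card B \<le> k" "f T \<le> R * b * f B" by blast
    have "(\<Union>i<l. ?S i) \<subseteq> set M"
    proof (rule UN_least)
      fix i assume "i \<in> {..<l}"
      then have "?S i = (\<lambda>q. M ! q) ` Pos M ?ts (j, i)" using I5 jW by simp
      then show "?S i \<subseteq> set M" using imgM by simp
    qed
    then have BM: "B \<subseteq> set M" using B(1) by blast
    have "(\<Union>i<l. ?S i) \<subseteq> set xs" by (rule UN_least) (rule ideal_sub)
    then have "B \<subseteq> set xs" using B(1) by (rule order_trans[rotated])
    then have "0 \<le> f B" by (rule sm_nonneg[OF sm])
    then have "R * b * f B \<le> c * f B" using Rb by (rule mult_right_mono[rotated])
    then show ?thesis using B BM by auto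
  qed
qed

definition bestI :: "nat \<Rightarrow> view \<Rightarrow> nat \<Rightarrow> nat set" where
  "bestI k g n = (SOME I. I \<subseteq> {..<n} \<and> card I \<le> k \<and> (\<forall>J. J \<subseteq> {..<n} \<and> card J \<le> k \<longrightarrow> g J \<le> g I))"

lemma bestI: "bestI k g n \<subseteq> {..<n} \<and> card (bestI k g n) \<le> k \<and>
   (\<forall>J. J \<subseteq> {..<n} \<and> card J \<le> k \<longrightarrow> g J \<le> g (bestI k g n))"
proof -
  let ?C = "{J. J \<subseteq> {..<n} \<and> card J \<le> k}"
  have fin: "finite ?C" by (rule finite_subset[of _ "Pow {..<n}"]) auto
  have ne: "{} \<in> ?C" by simp
  have "Max (g ` ?C) \<in> g ` ?C" using fin ne by (intro Max_in) auto
  then obtain I where I: "I \<in> ?C" "g I = Max (g ` ?C)" by auto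
  have "\<forall>J. J \<subseteq> {..<n} \<and> card J \<le> k \<longrightarrow> g J \<le> g I"
    using fin I(2) by auto
  then have "\<exists>I. I \<subseteq> {..<n} \<and> card I \<le> k \<and> (\<forall>J. J \<subseteq> {..<n} \<and> card J \<le> k \<longrightarrow> g J \<le> g I)"
    using I(1) by blast
  then show ?thesis unfolding bestI_def by (rule someI_ex)
qed

lemma output_props:
  fixes M :: "'a list"
  shows "card ((\<lambda>i. M ! i) ` (bestI k (view_of f M) (length M) \<inter> {..<length M})) \<le> k"
    "\<And>B. B \<subseteq> set M \<Longrightarrow> card B \<le> k \<Longrightarrow> f B \<le> f ((\<lambda>i. M ! i) ` (bestI k (view_of f M) (length M) \<inter> {..<length M}))"
proof -
  define S where "S = (\<lambda>i. M ! i) ` (bestI k (view_of f M) (length M) \<inter> {..<length M})"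
  let ?I = "bestI k (view_of f M) (length M)"
  have bI: "?I \<subseteq> {..<length M}" "card ?I \<le> k"
    "\<And>J. J \<subseteq> {..<length M} \<Longrightarrow> card J \<le> k \<Longrightarrow> view_of f M J \<le> view_of f M ?I"
    using bestI[of k "view_of f M" "length M"] by auto
  have finI: "finite ?I" using bI(1) finite_subset by blast
  have "card S \<le> card (?I \<inter> {..<length M})" unfolding S_def by (rule card_image_le) (use finI in simp)
  also have "\<dots> \<le> card ?I" using finI by (intro card_mono) auto
  finally show "card ((\<lambda>i. M ! i) ` (bestI k (view_of f M) (length M) \<inter> {..<length M})) \<le> k" using bI(2) by (simp add: S_def)
  fix B assume B: "B \<subseteq> set M" "card B \<le> k"
  define h where "h = (\<lambda>y. SOME q. q < length M \<and> M ! q = y)"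
  have h: "h y < length M \<and> M ! (h y) = y" if "y \<in> set M" for y
    unfolding h_def by (rule someI_ex) (use that in \<open>auto simp: in_set_conv_nth\<close>)
  define J where "J = h ` B"
  have finB: "finite B" using B(1) finite_subset by blast
  have J1: "J \<subseteq> {..<length M}" using h B(1) by (auto simp: J_def)
  have J2: "card J \<le> k" using card_image_le[OF finB, of h] B(2) by (simp add: J_def)
  have J3: "(\<lambda>i. M ! i) ` (J \<inter> {..<length M}) = B"
  proof -
    have "J \<inter> {..<length M} = J" using J1 by auto
    moreover have "(\<lambda>i. M ! i) ` J = B" unfolding J_def image_image using h B(1)
      by (auto simp: image_iff) (metis subsetD)
    ultimately show ?thesis by simp
  qed
  have "f B = view_of f M J" by (simp add: view_of_def J3)
  also have "\<dots> \<le> view_of f M ?I" using bI(3)[OF J1 J2] .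
  also have "\<dots> = f S" by (simp add: view_of_def S_def)
  finally show "f B \<le> f ((\<lambda>i. M ! i) ` (bestI k (view_of f M) (length M) \<inter> {..<length M}))" by (simp add: S_def)
qed

lemma params:
  fixes e :: real and m :: real and l :: nat and b R :: real
  assumes e: "0 < e" "e \<le> 1"
    and l_def: "l = nat \<lceil>4 / e\<rceil> + 1" and b_def: "b = 1 + e / 8" and R_def: "R = (3 * real l - 1) / (real l - 1)"
  shows "2 \<le> l" "1 < b" "R * (real l - 1) = 3 * real l - 1" "R * b \<le> 3 + e"
    "\<And>k. 1 \<le> k \<Longrightarrow> real k * (real (card (Wn b k m)) * real l + 1) \<le> 100 * real k * (1 + ln (real k)) / e ^ 2"
proof -
  have e4: "4 \<le> 4 / e" using e by (simp add: field_simps)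
  have c0: "0 \<le> \<lceil>4 / e\<rceil>" using e4 by linarith
  have lr: "real l - 1 = real_of_int \<lceil>4 / e\<rceil>" unfolding l_def using c0 by simp
  have lo: "4 / e \<le> real l - 1" unfolding lr by (rule le_of_int_ceiling)
  have hi: "real l - 1 \<le> 4 / e + 1" unfolding lr by (rule of_int_ceiling_le_add_one)
  have l4: "4 \<le> real l - 1" using lo e4 by linarith
  show "2 \<le> l" using l4 by simp
  show "1 < b" using e by (simp add: b_def)
  have lpos: "0 < real l - 1" using l4 by linarith
  show Req: "R * (real l - 1) = 3 * real l - 1" using lpos by (simp add: R_def)
  have R3: "R = 3 + 2 / (real l - 1)" using lpos by (simp add: R_def field_simps)
  have e4p: "0 < 4 / e" using e by simp
  have pp: "0 < (real l - 1) * (4 / e)" by (rule mult_pos_pos[OF lpos e4p])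
  have "2 / (real l - 1) \<le> 2 / (4 / e)" by (rule divide_left_mono[OF lo _ pp]) simp
  also have "2 / (4 / e) = e / 2" by simp
  finally have Rle: "R \<le> 3 + e / 2" using R3 by simp
  have R0: "0 \<le> R" using R3 lpos by simp
  have "R * b \<le> (3 + e / 2) * b" using Rle e by (intro mult_right_mono) (auto simp: b_def)
  also have "\<dots> = 3 + e / 2 + 3 * e / 8 + e * e / 16" by (simp add: b_def field_simps)
  also have "\<dots> \<le> 3 + e"
  proof -
    have "e * e \<le> e" using e by (simp add: mult_le_cancel_right1)
    then show ?thesis using e by linarith
  qed
  finally show "R * b \<le> 3 + e" .
  fix k :: nat assume k: "1 \<le> k"
  define K where "K = ln (real k)"
  have K0: "0 \<le> K" using k by (simp add: K_def)
  have b1: "1 < b" using e by (simp add: b_def)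
  have lnb: "e / 10 \<le> ln b"
  proof -
    have "e / 8 - (e / 8)\<^sup>2 \<le> ln (1 + e / 8)" using e by (intro ln_one_plus_pos_lower_bound) auto
    moreover have "(e / 8)\<^sup>2 \<le> e / 64"
    proof -
      have "(e / 8)\<^sup>2 = e * e / 64" by (simp add: power2_eq_square)
      also have "e * e \<le> e" using e by (simp add: mult_le_cancel_right1)
      then have "e * e / 64 \<le> e / 64" by simp
      finally show ?thesis .
    qed
    ultimately show ?thesis using e by (simp add: b_def)
  qed
  have lg: "log b (real k) \<le> 10 * K / e"
  proof -
    have "log b (real k) = K / ln b" by (simp add: log_def K_def)
    also have "\<dots> \<le> K / (e / 10)"
    proof (rule divide_left_mono[OF lnb K0])
      have "0 < e / 10" using e by simp
      moreover have "0 < ln b" using b1 by simp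
      ultimately show "0 < ln b * (e / 10)" by (rule mult_pos_pos[rotated])
    qed
    also have "\<dots> = 10 * K / e" by simp
    finally show ?thesis .
  qed
  have cW: "real (card (Wn b k m)) \<le> 10 * K / e + 1" using Wn_card[OF b1 k, of m] lg by linarith
  have q1: "1 \<le> 1 / e" using e by simp
  have rl: "real l \<le> 6 / e"
  proof -
    have "real l \<le> 4 / e + 2" using hi by simp
    also have "2 \<le> 2 / e" using e by (simp add: field_simps)
    then have "4 / e + 2 \<le> 6 / e" by simp
    finally show ?thesis .
  qed
  have A: "10 * K / e + 1 \<le> 10 * (K + 1) / e"
  proof -
    have "1 \<le> 10 / e" using e by (simp add: field_simps)
    then show ?thesis by (simp add: add_divide_distrib distrib_left)
  qed
  have "real (card (Wn b k m)) * real l \<le> (10 * (K + 1) / e) * (6 / e)"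
    using cW A rl K0 e by (intro mult_mono) auto
  also have "\<dots> = 60 * (K + 1) / e ^ 2" by (simp add: power2_eq_square)
  finally have B: "real (card (Wn b k m)) * real l \<le> 60 * (K + 1) / e ^ 2" .
  have C: "1 \<le> (K + 1) / e ^ 2"
  proof -
    have "e ^ 2 \<le> 1" using e by (simp add: power_le_one)
    also have "1 \<le> K + 1" using K0 by simp
    finally show ?thesis using e by (simp add: field_simps)
  qed
  have "real (card (Wn b k m)) * real l + 1 \<le> 100 * (1 + K) / e ^ 2"
  proof -
    have z1: "60 * (K + 1) / e ^ 2 = 60 * ((K + 1) / e ^ 2)" by simp
    have z2: "100 * (1 + K) / e ^ 2 = 100 * ((K + 1) / e ^ 2)" by (simp add: add.commute)
    show ?thesis using B C unfolding z1 z2 by linarith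
  qed
  then have X: "real k * (real (card (Wn b k m)) * real l + 1) \<le> real k * (100 * (1 + K) / e ^ 2)"
    by (intro mult_left_mono) auto
  have Y: "real k * (100 * (1 + K) / e ^ 2) = 100 * real k * (1 + ln (real k)) / e ^ 2"
    by (simp add: K_def)
  show "real k * (real (card (Wn b k m)) * real l + 1) \<le> 100 * real k * (1 + ln (real k)) / e ^ 2"
    using X unfolding Y .
qed

theorem theorem1p1:
  shows "\<exists>C::real. \<forall>\<epsilon>::real. 0 < \<epsilon> \<and> \<epsilon> \<le> 1 \<longrightarrow>
    (\<exists>(st::stepfn) (fin::finfn) (D::real).
      \<forall>(f::'a set \<Rightarrow> real) (xs::'a list) (k::nat).
        distinct xs \<and> 1 \<le> k \<and> nonneg_submodular_on (set xs) f \<longrightarrow>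
          \<comment> \<open>memory bounds at every point of the stream\<close>
          (\<forall>j \<le> length xs. \<forall>(M, a) \<in> set_pmf (run st k f (take j xs)).
              real (length M) \<le> C * real k * (1 + ln (real k)) / \<epsilon>^2 \<and>
              real (length a) \<le> D * real k * (1 + ln (real k) + ln (real (length xs))) ^ nat \<lceil>D\<rceil>) \<and>
          \<comment> \<open>feasibility\<close>
          (\<forall>S \<in> set_pmf (stream_output st fin k f xs). card S \<le> k) \<and>
          \<comment> \<open>approximation ratio\<close>
          (\<forall>T. T \<subseteq> set xs \<and> card T \<le> k \<longrightarrow>
              f T / (3 + \<epsilon>) \<le> measure_pmf.expectation (stream_output st fin k f xs) f))"
proof (intro exI[of _ "100::real"] allI impI)
  fix e :: real assume e: "0 < e \<and> e \<le> 1"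
  define l where "l = nat \<lceil>4 / e\<rceil> + 1"
  define b where "b = 1 + e / 8"
  define R where "R = (3 * real l - 1) / (real l - 1)"
  note P = params[OF conjunct1[OF e] conjunct2[OF e] l_def b_def R_def]
  define st :: stepfn where "st = (\<lambda>k g n a. return_pmf (stp l b k g n a))"
  define fin :: finfn where "fin = (\<lambda>k g n a. return_pmf (bestI k g n))"
  define D :: real where "D = 200 / e ^ 2"
  show "\<exists>(st::stepfn) (fin::finfn) (D::real).
      \<forall>(f::'a set \<Rightarrow> real) (xs::'a list) (k::nat).
        distinct xs \<and> 1 \<le> k \<and> nonneg_submodular_on (set xs) f \<longrightarrow>
          (\<forall>j \<le> length xs. \<forall>(M, a) \<in> set_pmf (run st k f (take j xs)).
              real (length M) \<le> 100 * real k * (1 + ln (real k)) / e^2 \<and>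
              real (length a) \<le> D * real k * (1 + ln (real k) + ln (real (length xs))) ^ nat \<lceil>D\<rceil>) \<and>
          (\<forall>S \<in> set_pmf (stream_output st fin k f xs). card S \<le> k) \<and>
          (\<forall>T. T \<subseteq> set xs \<and> card T \<le> k \<longrightarrow>
              f T / (3 + e) \<le> measure_pmf.expectation (stream_output st fin k f xs) f)"
  proof (intro exI[of _ st] exI[of _ fin] exI[of _ D] allI impI)
    fix f :: "'a set \<Rightarrow> real" and xs :: "'a list" and k :: nat
    assume H: "distinct xs \<and> 1 \<le> k \<and> nonneg_submodular_on (set xs) f"
    have dx: "distinct xs" and k: "1 \<le> k" and sm: "nonneg_submodular_on (set xs) f" using H by auto
    have b1: "1 < b" by (rule P(2))
    have runeq: "run st k f ys = return_pmf (foldl (dstep l b k f) ([], []) ys)" for ys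
      unfolding run_def by (rule run_from_det) (simp add: st_def)
    have invp: "Inv l b k f ys (foldl (dstep l b k f) ([], []) ys)" if "distinct ys" "set ys \<subseteq> set xs" for ys
      using Inv_prefix[OF sm b1 k] that by blast
    have Kpos: "1 \<le> real k * (1 + ln (real k)) / e ^ 2"
    proof -
      have "e ^ 2 \<le> 1" using e by (simp add: power_le_one)
      also have "1 \<le> real k * (1 + ln (real k))"
      proof -
        have "1 * 1 \<le> real k * (1 + ln (real k))" using k by (intro mult_mono) auto
        then show ?thesis by simp
      qed
      finally show ?thesis using e by (simp add: field_simps)
    qed
    have mem: "\<forall>j \<le> length xs. \<forall>(M, a) \<in> set_pmf (run st k f (take j xs)).
              real (length M) \<le> 100 * real k * (1 + ln (real k)) / e^2 \<and>
              real (length a) \<le> D * real k * (1 + ln (real k) + ln (real (length xs))) ^ nat \<lceil>D\<rceil>"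
    proof (intro allI impI)
      fix j assume j: "j \<le> length xs"
      have X: "real (length M) \<le> 100 * real k * (1 + ln (real k)) / e^2 \<and>
              real (length a) \<le> D * real k * (1 + ln (real k) + ln (real (length xs))) ^ nat \<lceil>D\<rceil>"
        if s: "(M, a) \<in> set_pmf (run st k f (take j xs))" for M a
      proof -
      have "(M, a) = foldl (dstep l b k f) ([], []) (take j xs)" using s by (simp add: runeq)
      then have inv: "Inv l b k f (take j xs) (M, a)" using invp[of "take j xs"] dx
        by (simp add: set_take_subset)
      note mem = Inv_mem[OF b1 k inv]
      have M1: "real (length M) \<le> real k * (real (card (Wn b k (msing f (take j xs)))) * real l + 1)"
      proof -
        have "real (length M) \<le> real (k * (card (Wn b k (msing f (take j xs))) * l + 1))"
          using mem(1) by (simp only: of_nat_le_iff)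
        then show ?thesis by (simp add: distrib_left)
      qed
      have M2: "real (length M) \<le> 100 * real k * (1 + ln (real k)) / e ^ 2"
        using M1 P(5)[OF k] by (rule order_trans)
      have A1: "real (length a) \<le> 100 * real k * (1 + ln (real k)) / e ^ 2 + 1"
        using mem(2) M2 by linarith
      have A2: "100 * real k * (1 + ln (real k)) / e ^ 2 + 1 \<le> D * real k * (1 + ln (real k))"
      proof -
        obtain Z where Z: "Z = real k * (1 + ln (real k)) / e ^ 2" by blast
        have q1: "D * real k * (1 + ln (real k)) = 200 * Z" by (simp add: D_def Z)
        have q2: "100 * real k * (1 + ln (real k)) / e ^ 2 = 100 * Z" by (simp add: Z)
        have "1 \<le> Z" using Kpos Z by simp
        then show ?thesis unfolding q1 q2 by linarith
      qed
      have lnn: "0 \<le> ln (real (length xs))"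
        by (cases "length xs = 0") (auto simp: Suc_le_eq)
      have base1: "1 \<le> 1 + ln (real k) + ln (real (length xs))" using lnn k by simp
      have Dpos: "0 < D" using e by (simp add: D_def)
      have "1 + ln (real k) \<le> 1 + ln (real k) + ln (real (length xs))" using lnn by simp
      also have "\<dots> \<le> (1 + ln (real k) + ln (real (length xs))) ^ nat \<lceil>D\<rceil>"
        using base1 Dpos by (intro self_le_power) auto
      finally have pw: "1 + ln (real k) \<le> (1 + ln (real k) + ln (real (length xs))) ^ nat \<lceil>D\<rceil>" .
      have "D * real k * (1 + ln (real k)) \<le> D * real k * (1 + ln (real k) + ln (real (length xs))) ^ nat \<lceil>D\<rceil>"
        using pw Dpos by (intro mult_left_mono) auto
      then have A3: "real (length a) \<le> D * real k * (1 + ln (real k) + ln (real (length xs))) ^ nat \<lceil>D\<rceil>"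
        using A1 A2 by linarith
      show ?thesis using M2 A3 by simp
      qed
      then show "\<forall>(M, a) \<in> set_pmf (run st k f (take j xs)).
              real (length M) \<le> 100 * real k * (1 + ln (real k)) / e^2 \<and>
              real (length a) \<le> D * real k * (1 + ln (real k) + ln (real (length xs))) ^ nat \<lceil>D\<rceil>"
        by blast
    qed
    obtain M a where fe: "foldl (dstep l b k f) ([], []) xs = (M, a)" by (cases "foldl (dstep l b k f) ([], []) xs")
    define S where "S = (\<lambda>i. M ! i) ` (bestI k (view_of f M) (length M) \<inter> {..<length M})"
    have out: "stream_output st fin k f xs = return_pmf S"
      by (simp add: stream_output_def runeq fe fin_def S_def bind_return_pmf)
    have invx: "Inv l b k f xs (M, a)" using invp[of xs] dx fe by simp
    have feas: "\<forall>S \<in> set_pmf (stream_output st fin k f xs). card S \<le> k"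
      using output_props(1)[of M k f] by (simp add: out S_def)
    have apx: "f T / (3 + e) \<le> measure_pmf.expectation (stream_output st fin k f xs) f"
      if T: "T \<subseteq> set xs \<and> card T \<le> k" for T
    proof -
      obtain B where B: "B \<subseteq> set M" "card B \<le> k" "f T \<le> (3 + e) * f B"
        using Inv_approx[OF sm dx b1 k P(1) P(3) P(4) invx] T by blast
      have "f B \<le> f S" unfolding S_def by (rule output_props(2)[OF B(1) B(2)])
      then have "(3 + e) * f B \<le> (3 + e) * f S" using e by (intro mult_left_mono) auto
      then have "f T \<le> (3 + e) * f S" using B(3) by linarith
      then have "f T / (3 + e) \<le> f S" using e by (simp add: divide_le_eq mult.commute)
      then show ?thesis by (simp add: out)
    qed
    show "(\<forall>j \<le> length xs. \<forall>(M, a) \<in> set_pmf (run st k f (take j xs)).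
              real (length M) \<le> 100 * real k * (1 + ln (real k)) / e^2 \<and>
              real (length a) \<le> D * real k * (1 + ln (real k) + ln (real (length xs))) ^ nat \<lceil>D\<rceil>) \<and>
          (\<forall>S \<in> set_pmf (stream_output st fin k f xs). card S \<le> k) \<and>
          (\<forall>T. T \<subseteq> set xs \<and> card T \<le> k \<longrightarrow>
              f T / (3 + e) \<le> measure_pmf.expectation (stream_output st fin k f xs) f)"
      using mem feas apx by blast
  qed
qed

end
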